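(* Let $T$ be a tree and let $T'\subseteq T$ be a nonempty subset which is open and connected. Then $\chi_T(T')=2-\mathrm{card}\,\partial_T T'$.
   Context: A tree $T$ is a finite connected graph without cycles, with vertex set $V$ and edge set $E$ (edges are $2$-element subsets of $V$), regarded as the set $V\sqcup E$. It carries the topology whose closed sets are the sub-graphs, i.e. subsets containing both endpoints of each edge they contain. $\overline{T'}$ denotes the closure and $\partial_T T':=\overline{T'}\setminus T'$ the boundary. For a vertex $v$, $\mathrm{val}(v)$ is the number of edges containing $v$, $\chi_T(v):=2-\mathrm{val}(v)$, and for a subset $T'$, $\chi_T(T'):=\sum_{v\in V\cap T'}\chi_T(v)$. *)

theory Defs
  imports "HOL-Analysis.Analysis"
begin

text \<open>A graph with vertex set V and edge set E (edges are 2-element subsets of V).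
  Points of the space T = V \<squnion> E are represented in the sum type: Inl v for vertices,
  Inr e for edges.\<close>

definition is_graph :: "'v set \<Rightarrow> 'v set set \<Rightarrow> bool" where
  "is_graph V E \<longleftrightarrow> finite V \<and>
     (\<forall>e\<in>E. \<exists>u w. e = {u, w} \<and> u \<noteq> w \<and> u \<in> V \<and> w \<in> V)"

definition graph_connected :: "'v set \<Rightarrow> 'v set set \<Rightarrow> bool" where
  "graph_connected V E \<longleftrightarrow> V \<noteq> {} \<and>
     (\<forall>u\<in>V. \<forall>w\<in>V. (u, w) \<in> {(x, y). {x, y} \<in> E}\<^sup>*)"

definition has_cycle :: "'v set \<Rightarrow> 'v set set \<Rightarrow> bool" where
  "has_cycle V E \<longleftrightarrow> (\<exists>vs. length vs \<ge> 3 \<and> distinct vs \<and> set vs \<subseteq> V \<and>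
     (\<forall>i < length vs. {vs ! i, vs ! ((i + 1) mod length vs)} \<in> E))"

definition is_tree :: "'v set \<Rightarrow> 'v set set \<Rightarrow> bool" where
  "is_tree V E \<longleftrightarrow> is_graph V E \<and> graph_connected V E \<and> \<not> has_cycle V E"

definition tree_space :: "'v set \<Rightarrow> 'v set set \<Rightarrow> ('v + 'v set) set" where
  "tree_space V E = Inl ` V \<union> Inr ` E"

definition is_subgraph :: "('v + 'v set) set \<Rightarrow> bool" where
  "is_subgraph S \<longleftrightarrow> (\<forall>e. Inr e \<in> S \<longrightarrow> (\<forall>v\<in>e. Inl v \<in> S))"

definition tree_topology :: "'v set \<Rightarrow> 'v set set \<Rightarrow> ('v + 'v set) topology" where
  "tree_topology V E = topology (\<lambda>U. U \<subseteq> tree_space V E \<and> is_subgraph (tree_space V E - U))"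

definition tree_boundary :: "'v set \<Rightarrow> 'v set set \<Rightarrow> ('v + 'v set) set \<Rightarrow> ('v + 'v set) set" where
  "tree_boundary V E S = (tree_topology V E) closure_of S - S"

definition valence :: "'v set set \<Rightarrow> 'v \<Rightarrow> nat" where
  "valence E v = card {e\<in>E. v \<in> e}"

definition chi_vertex :: "'v set set \<Rightarrow> 'v \<Rightarrow> int" where
  "chi_vertex E v = 2 - int (valence E v)"

definition chi_set :: "'v set \<Rightarrow> 'v set set \<Rightarrow> ('v + 'v set) set \<Rightarrow> int" where
  "chi_set V E S = (\<Sum>v\<in>{v\<in>V. Inl v \<in> S}. chi_vertex E v)"

end

theory Submission
  imports Defs
begin


lemma open_tree:
  assumes g: "is_graph V E"
  shows "openin (tree_topology V E) U \<longleftrightarrow> U \<subseteq> tree_space V E \<and>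
     (\<forall>v e. Inl v \<in> U \<longrightarrow> e \<in> E \<longrightarrow> v \<in> e \<longrightarrow> Inr e \<in> U)"
proof -
  have ev: "\<And>e v. e \<in> E \<Longrightarrow> v \<in> e \<Longrightarrow> v \<in> V" using g unfolding is_graph_def by fastforce
  have eq: "(\<lambda>U. U \<subseteq> tree_space V E \<and> is_subgraph (tree_space V E - U)) =
     (\<lambda>U. U \<subseteq> tree_space V E \<and> (\<forall>v e. Inl v \<in> U \<longrightarrow> e \<in> E \<longrightarrow> v \<in> e \<longrightarrow> Inr e \<in> U))"
    apply (rule ext)
    unfolding is_subgraph_def tree_space_def using ev by auto
  have "istopology (\<lambda>U. U \<subseteq> tree_space V E \<and> (\<forall>v e. Inl v \<in> U \<longrightarrow> e \<in> E \<longrightarrow> v \<in> e \<longrightarrow> Inr e \<in> U))"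
    unfolding istopology_def by (auto; meson)
  then show ?thesis unfolding tree_topology_def eq by simp
qed

lemma topspace_tree:
  assumes g: "is_graph V E"
  shows "topspace (tree_topology V E) = tree_space V E"
proof -
  have ev: "\<And>e v. e \<in> E \<Longrightarrow> v \<in> e \<Longrightarrow> v \<in> V" using g unfolding is_graph_def by fastforce
  have "openin (tree_topology V E) (tree_space V E)"
    unfolding open_tree[OF g] tree_space_def by auto
  moreover have "\<And>U. openin (tree_topology V E) U \<Longrightarrow> U \<subseteq> tree_space V E"
    using open_tree[OF g] by blast
  ultimately show ?thesis unfolding topspace_def by blast
qed



lemma has_cycle_mono:
  assumes "has_cycle W F" "W \<subseteq> V" "F \<subseteq> E" shows "has_cycle V E"
  using assms unfolding has_cycle_def by blast

lemma leaf_exists: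
  assumes g: "is_graph W F" and nc: "\<not> has_cycle W F" and ne: "F \<noteq> {}"
  shows "\<exists>l n. {l, n} \<in> F \<and> l \<noteq> n \<and> (\<forall>e\<in>F. l \<in> e \<longrightarrow> e = {l, n})"
proof -
  define P where "P = {vs. distinct vs \<and> set vs \<subseteq> W \<and> length vs \<ge> 2 \<and>
      (\<forall>i. Suc i < length vs \<longrightarrow> {vs!i, vs!Suc i} \<in> F)}"
  have fin: "finite W" using g unfolding is_graph_def by blast
  have "P \<subseteq> {vs. set vs \<subseteq> W \<and> length vs \<le> card W}"
  proof
    fix vs assume "vs \<in> P"
    then have d: "distinct vs" and sw: "set vs \<subseteq> W" unfolding P_def by auto
    have "length vs = card (set vs)" using distinct_card[OF d] by simp
    also have "\<dots> \<le> card W" using card_mono[OF fin sw] .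
    finally show "vs \<in> {vs. set vs \<subseteq> W \<and> length vs \<le> card W}" using sw by simp
  qed
  then have finP: "finite P" using finite_lists_length_le[OF fin] finite_subset by blast
  obtain e0 where "e0 \<in> F" using ne by blast
  then obtain u w where uw: "e0 = {u,w}" "u \<noteq> w" "u \<in> W" "w \<in> W" using g unfolding is_graph_def by blast
  have "[u,w] \<in> P" unfolding P_def using uw \<open>e0 \<in> F\<close> by (auto simp: less_Suc_eq)
  then have neP: "P \<noteq> {}" by blast
  define m where "m = Max (length ` P)"
  have "m \<in> length ` P" unfolding m_def using finP neP by simp
  then obtain vs where vs: "vs \<in> P" "length vs = m" by blast
  have maxl: "\<And>ws. ws \<in> P \<Longrightarrow> length ws \<le> length vs" unfolding vs(2) m_def using finP by simp
  define k where "k = length vs - 1"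
  have len: "length vs = Suc k" "k \<ge> 1" using vs(1) unfolding P_def k_def by auto
  define l where "l = vs ! k"
  define n where "n = vs ! (k - 1)"
  have dist: "distinct vs" and setW: "set vs \<subseteq> W" and edg: "\<And>i. Suc i < length vs \<Longrightarrow> {vs!i, vs!Suc i} \<in> F"
    using vs(1) unfolding P_def by auto
  have ln_edge: "{l, n} \<in> F" using edg[of "k-1"] len unfolding l_def n_def by (simp add: insert_commute)
  have lnn: "l \<noteq> n" unfolding l_def n_def using dist len by (simp add: nth_eq_iff_index_eq)
  have all: "\<forall>e\<in>F. l \<in> e \<longrightarrow> e = {l, n}"
  proof (intro ballI impI)
    fix e assume eF: "e \<in> F" and le: "l \<in> e"
    obtain u w where uw: "e = {u,w}" "u \<noteq> w" "u \<in> W" "w \<in> W" using g eF unfolding is_graph_def by blast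
    define x where "x = (if u = l then w else u)"
    have ex: "e = {l,x}" "x \<noteq> l" "x \<in> W" using uw le unfolding x_def by auto
    show "e = {l, n}"
    proof (cases "x \<in> set vs")
      case False
      have "vs @ [x] \<in> P" unfolding P_def
      proof (intro CollectI conjI allI impI)
        show "distinct (vs @ [x])" using dist False by simp
        show "set (vs @ [x]) \<subseteq> W" using setW ex by simp
        show "2 \<le> length (vs @ [x])" using len by simp
        fix i assume i: "Suc i < length (vs @ [x])"
        show "{(vs @ [x]) ! i, (vs @ [x]) ! Suc i} \<in> F"
        proof (cases "Suc i < length vs")
          case True then show ?thesis using edg[OF True] by (simp add: nth_append)
        next
          case False
          then have "i = k" using i len by simp
          then show ?thesis using eF ex len unfolding l_def by (simp add: nth_append)
        qed
      qed
      from maxl[OF this] show ?thesis by simp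
    next
      case True
      then obtain i where i: "i < length vs" "vs ! i = x" by (auto simp: in_set_conv_nth)
      have "i \<noteq> k" using i(2) ex(2) unfolding l_def by auto
      show ?thesis
      proof (cases "i = k - 1")
        case True then show ?thesis using ex i unfolding n_def by simp
      next
        case False
        with \<open>i \<noteq> k\<close> i len have ik: "i + 2 \<le> k" by simp
        define cs where "cs = drop i vs"
        have lcs: "length cs = Suc k - i" unfolding cs_def using len by simp
        have "has_cycle W F" unfolding has_cycle_def
        proof (intro exI conjI allI impI)
          show "3 \<le> length cs" using lcs ik by simp
          show "distinct cs" unfolding cs_def using dist by simp
          show "set cs \<subseteq> W" unfolding cs_def using order_trans[OF set_drop_subset setW] .
          fix j assume j: "j < length cs"
          show "{cs ! j, cs ! ((j + 1) mod length cs)} \<in> F"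
          proof (cases "j + 1 < length cs")
            case True
            then have "(j+1) mod length cs = j + 1" by simp
            then show ?thesis unfolding cs_def using edg[of "i+j"] True lcs len
              by (simp add: cs_def)
          next
            case False
            then have "j + 1 = length cs" using j by simp
            then have "(j+1) mod length cs = 0" by simp
            moreover have "cs ! j = l"
            proof -
              have "i + j = k" using \<open>j + 1 = length cs\<close> lcs ik by simp
              then show ?thesis unfolding cs_def l_def using len by simp
            qed
            moreover have "cs ! 0 = x" unfolding cs_def using i by simp
            ultimately show ?thesis using eF ex by simp
          qed
        qed
        with nc show ?thesis by simp
      qed
    qed
  qed
  show ?thesis by (rule exI[of _ l], rule exI[of _ n], intro conjI ln_edge lnn all)
qed


lemma leaf_reach:
  assumes g: "is_graph W F" and ln: "\<forall>e\<in>F. l \<in> e \<longrightarrow> e = {l, n}"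
    and r: "(x,y) \<in> {(a,b). {a,b} \<in> F}\<^sup>*" and xl: "x \<noteq> l"
  shows "(y \<noteq> l \<longrightarrow> (x,y) \<in> {(a,b). {a,b} \<in> F - {{l,n}}}\<^sup>*) \<and>
         (y = l \<longrightarrow> (x,n) \<in> {(a,b). {a,b} \<in> F - {{l,n}}}\<^sup>*)"
  using r
proof (induction rule: rtrancl_induct)
  case base
  then show ?case using xl by simp
next
  case (step y z)
  let ?R = "{(a,b). {a,b} \<in> F - {{l,n}}}"
  have yz: "{y,z} \<in> F" using step(2) by simp
  show ?case
  proof (cases "y = l")
    case yl: True
    show ?thesis
    proof (cases "z = l")
      case True
      then have "{l} \<in> F" using yz yl by simp
      then show ?thesis using g unfolding is_graph_def by (metis doubleton_eq_iff insert_absorb2 singleton_insert_inj_eq)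
    next
      case False
      have "{y,z} = {l,n}" using ln yz yl by simp
      then have "z = n" using yl False by (metis doubleton_eq_iff)
      then show ?thesis using step(3) yl False by simp
    qed
  next
    case ynl: False
    show ?thesis
    proof (cases "z = l")
      case True
      have "{y,z} = {l,n}" using ln yz True by simp
      then have "y = n" using ynl True by (metis doubleton_eq_iff)
      then show ?thesis using step(3) ynl True by simp
    next
      case False
      have "{y,z} \<noteq> {l,n}" using False ynl by auto
      then have "(y,z) \<in> ?R" using yz by simp
      then show ?thesis using step(3) ynl False by (meson rtrancl_into_rtrancl)
    qed
  qed
qed


lemma graph_finite_edges: "is_graph W F \<Longrightarrow> finite F"
proof -
  assume g: "is_graph W F"
  have "F \<subseteq> Pow W"
  proof
    fix e assume "e \<in> F"
    then obtain u w where "e = {u,w}" "u \<in> W" "w \<in> W" using g unfolding is_graph_def by blast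
    then show "e \<in> Pow W" by simp
  qed
  moreover have "finite W" using g unfolding is_graph_def by simp
  ultimately show "finite F" by (meson finite_Pow_iff finite_subset)
qed

lemma tree_card_aux:
  "card F = m \<Longrightarrow> is_graph W F \<Longrightarrow> graph_connected W F \<Longrightarrow> \<not> has_cycle W F \<Longrightarrow> card W = card F + 1"
proof (induction m arbitrary: W F)
  case 0
  have "finite F" using graph_finite_edges[OF "0.prems"(2)] .
  then have F0: "F = {}" using "0.prems"(1) by simp
  obtain u where u: "u \<in> W" using "0.prems"(3) unfolding graph_connected_def by blast
  have eqw: "\<And>w. w \<in> W \<Longrightarrow> w = u"
  proof -
    fix w assume "w \<in> W"
    have all: "\<forall>a\<in>W. \<forall>b\<in>W. (a, b) \<in> {(x, y). {x, y} \<in> F}\<^sup>*"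
      using "0.prems"(3) unfolding graph_connected_def by (rule conjunct2)
    have "(u, w) \<in> {(x, y). {x, y} \<in> F}\<^sup>*" using bspec[OF bspec[OF all u] \<open>w \<in> W\<close>] .
    moreover have "{(x, y). {x, y} \<in> F} = {}" using F0 by simp
    ultimately have "(u, w) \<in> Id" by (metis rtrancl_empty)
    then show "w = u" by simp
  qed
  have "W \<subseteq> {u}"
  proof
    fix w assume "w \<in> W"
    then show "w \<in> {u}" using eqw[OF \<open>w \<in> W\<close>] by simp
  qed
  then have "W = {u}" using u by blast
  then show ?case using F0 by simp
next
  case (Suc m)
  note g = Suc.prems(2)
  have finF: "finite F" using graph_finite_edges[OF g] .
  have finW: "finite W" using g unfolding is_graph_def by simp
  have "F \<noteq> {}" using Suc.prems(1) by auto
  then obtain l n where ln: "{l, n} \<in> F" "l \<noteq> n" and lf: "\<forall>e\<in>F. l \<in> e \<longrightarrow> e = {l, n}"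
    using leaf_exists[OF g Suc.prems(4)] by blast
  have "\<forall>e\<in>F. \<exists>u w. e = {u, w} \<and> u \<noteq> w \<and> u \<in> W \<and> w \<in> W" using g unfolding is_graph_def by simp
  then have "\<exists>u w. {l,n} = {u,w} \<and> u \<noteq> w \<and> u \<in> W \<and> w \<in> W" using ln(1) by (rule bspec)
  then obtain u w where uw: "{l,n} = {u,w}" "u \<in> W" "w \<in> W" by blast
  then have lW: "l \<in> W" and nW: "n \<in> W" by (auto simp: doubleton_eq_iff)
  define W' where "W' = W - {l}"
  define F' where "F' = F - {{l,n}}"
  have cF': "card F' = m" unfolding F'_def using Suc.prems(1) ln(1) finF by simp
  have cW': "card W' = card W - 1" unfolding W'_def using lW finW by simp
  have g': "is_graph W' F'" unfolding is_graph_def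
  proof (intro conjI ballI)
    show "finite W'" unfolding W'_def using finW by simp
    fix e assume e: "e \<in> F'"
    then have eF: "e \<in> F" and ne: "e \<noteq> {l,n}" unfolding F'_def by auto
    obtain a b where ab: "e = {a,b}" "a \<noteq> b" "a \<in> W" "b \<in> W" using g eF unfolding is_graph_def by blast
    have "l \<notin> e" using lf eF ne by auto
    then have "a \<in> W'" "b \<in> W'" using ab unfolding W'_def by auto
    then show "\<exists>u w. e = {u, w} \<and> u \<noteq> w \<and> u \<in> W' \<and> w \<in> W'" using ab by blast
  qed
  have c': "graph_connected W' F'" unfolding graph_connected_def
  proof (intro conjI ballI)
    show "W' \<noteq> {}" unfolding W'_def using nW ln(2) by auto
    fix a b assume a: "a \<in> W'" and b: "b \<in> W'"
    have aW: "a \<in> W" "a \<noteq> l" "b \<in> W" "b \<noteq> l" using a b unfolding W'_def by auto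
    have "(a, b) \<in> {(x, y). {x, y} \<in> F}\<^sup>*" using Suc.prems(3) aW unfolding graph_connected_def by auto
    from leaf_reach[OF g lf this aW(2)] aW(4) show "(a, b) \<in> {(x, y). {x, y} \<in> F'}\<^sup>*" unfolding F'_def by simp
  qed
  have "W' \<subseteq> W" "F' \<subseteq> F" unfolding W'_def F'_def by auto
  then have nc': "\<not> has_cycle W' F'"
    using Suc.prems(4) has_cycle_mono[of W' F' W F] by auto
  have "card W' = card F' + 1" using Suc.IH[OF cF' g' c' nc'] .
  moreover have "card W > 0" using lW finW by (auto simp: card_gt_0_iff)
  ultimately show ?case using cW' cF' Suc.prems(1) by linarith
qed

lemma tree_card: "is_tree W F \<Longrightarrow> card W = card F + 1"
  unfolding is_tree_def using tree_card_aux[OF refl] by (elim conjE)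



theorem lemma2p8:
  fixes V :: "'v set" and E :: "'v set set" and T' :: "('v + 'v set) set"
  assumes "is_tree V E"
    and "T' \<subseteq> tree_space V E"
    and "T' \<noteq> {}"
    and "openin (tree_topology V E) T'"
    and "connectedin (tree_topology V E) T'"
  shows "chi_set V E T' = 2 - int (card (tree_boundary V E T'))"
proof -
  note tree = assms(1) and sub = assms(2) and ne = assms(3) and op = assms(4) and conn = assms(5)
  have g: "is_graph V E" using tree unfolding is_tree_def by (elim conjE)
  have finV: "finite V" using g unfolding is_graph_def by (elim conjE)
  have finE: "finite E" using graph_finite_edges[OF g] .
  have gE: "\<forall>e\<in>E. \<exists>u w. e = {u, w} \<and> u \<noteq> w \<and> u \<in> V \<and> w \<in> V" using g unfolding is_graph_def by (elim conjE)
  have ev: "v \<in> V" if a: "e \<in> E" "v \<in> e" for e v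
  proof -
    obtain u w where "e = {u, w}" "u \<in> V" "w \<in> V" using bspec[OF gE a(1)] by blast
    then show ?thesis using a(2) by auto
  qed
  have opc: "Inr e \<in> T'" if "Inl v \<in> T'" "e \<in> E" "v \<in> e" for v e
    using op that unfolding open_tree[OF g] by blast
  define V' where "V' = {v\<in>V. Inl v \<in> T'}"
  define E' where "E' = {e\<in>E. Inr e \<in> T'}"
  define B where "B = {b\<in>V. b \<notin> V' \<and> (\<exists>e\<in>E'. b \<in> e)}"
  define Pr where "Pr = Sigma E' (\<lambda>e. e - V')"
  have finV': "finite V'" unfolding V'_def using finV by simp
  have finE': "finite E'" unfolding E'_def using finE by simp
  have finB: "finite B" unfolding B_def using finV by simp
  have E'E: "E' \<subseteq> E" unfolding E'_def by blast
  have V'V: "V' \<subseteq> V" unfolding V'_def by blast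
  have e2: "\<exists>u w. e = {u, w} \<and> u \<noteq> w \<and> u \<in> V \<and> w \<in> V" if "e \<in> E'" for e
    using bspec[OF gE] that E'E by blast
  have fine: "finite e" if "e \<in> E'" for e using e2[OF that] by auto
  have card2: "card e = 2" if "e \<in> E'" for e using e2[OF that] by auto
  have finPr: "finite Pr" unfolding Pr_def using finE' fine by simp
  have cardPr: "card Pr = (\<Sum>e\<in>E'. card (e - V'))" unfolding Pr_def using finE' fine by simp
  have bd: "tree_boundary V E T' = Inl ` B"
  proof -
    have top: "topspace (tree_topology V E) = tree_space V E" using topspace_tree[OF g] .
    have "{x \<in> tree_space V E. \<forall>U. x \<in> U \<and> openin (tree_topology V E) U \<longrightarrow> (\<exists>y\<in>T'. y \<in> U)} - T' = Inl ` B"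
    proof (rule equalityI; rule subsetI)
      fix x assume x: "x \<in> {x \<in> tree_space V E. \<forall>U. x \<in> U \<and> openin (tree_topology V E) U \<longrightarrow> (\<exists>y\<in>T'. y \<in> U)} - T'"
      then have xT: "x \<in> tree_space V E" and xcl: "\<And>U. x \<in> U \<Longrightarrow> openin (tree_topology V E) U \<Longrightarrow> (\<exists>y\<in>T'. y \<in> U)"
        and xn: "x \<notin> T'" by auto
      show "x \<in> Inl ` B"
      proof (cases x)
        case (Inr e)
        then have eE: "e \<in> E" using xT unfolding tree_space_def by auto
        have "openin (tree_topology V E) {Inr e}" unfolding open_tree[OF g] tree_space_def using eE by auto
        then obtain y where "y \<in> T'" "y \<in> {Inr e}" using xcl[of "{Inr e}"] Inr by auto
        then have False using xn Inr by simp
        then show ?thesis ..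
      next
        case (Inl v)
        then have vV: "v \<in> V" using xT unfolding tree_space_def by auto
        have vV': "v \<notin> V'" using xn Inl unfolding V'_def by simp
        define U where "U = insert (Inl v) (Inr ` {e\<in>E. v \<in> e})"
        have "U \<subseteq> tree_space V E" unfolding U_def tree_space_def using vV by auto
        moreover have "\<forall>w e. Inl w \<in> U \<longrightarrow> e \<in> E \<longrightarrow> w \<in> e \<longrightarrow> Inr e \<in> U"
          unfolding U_def by auto
        ultimately have "openin (tree_topology V E) U" unfolding open_tree[OF g] by (intro conjI)
        then obtain y where y: "y \<in> T'" "y \<in> U" using xcl[of U] Inl unfolding U_def by auto
        have "y \<noteq> Inl v" using y(1) xn Inl by auto
        then obtain e where "y = Inr e" "e \<in> E" "v \<in> e" using y(2) unfolding U_def by auto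
        then have "e \<in> E'" "v \<in> e" using y(1) unfolding E'_def by auto
        then have "v \<in> B" unfolding B_def using vV vV' by auto
        then show ?thesis using Inl by simp
      qed
    next
      fix x :: "'v + 'v set" assume "x \<in> Inl ` B"
      then obtain b where xb: "x = Inl b" and bB: "b \<in> B" by auto
      then have bV: "b \<in> V" and bV': "b \<notin> V'" unfolding B_def by auto
      obtain e where eE': "e \<in> E'" and be: "b \<in> e" using bB unfolding B_def by auto
      have "x \<in> tree_space V E" using xb bV unfolding tree_space_def by simp
      moreover have "\<exists>y\<in>T'. y \<in> U" if "x \<in> U" "openin (tree_topology V E) U" for U
      proof -
        have "Inr e \<in> U" using that xb be eE' E'E unfolding open_tree[OF g] by blast
        moreover have "Inr e \<in> T'" using eE' unfolding E'_def by simp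
        ultimately show ?thesis by blast
      qed
      moreover have "x \<notin> T'" using xb bV bV' unfolding V'_def by simp
      ultimately show "x \<in> {x \<in> tree_space V E. \<forall>U. x \<in> U \<and> openin (tree_topology V E) U \<longrightarrow> (\<exists>y\<in>T'. y \<in> U)} - T'"
        by blast
    qed
    then show ?thesis unfolding tree_boundary_def closure_of_def top .
  qed
  have val: "valence E v = card {e\<in>E'. v \<in> e}" if "v \<in> V'" for v
  proof -
    have "{e\<in>E. v \<in> e} = {e\<in>E'. v \<in> e}" using that opc unfolding V'_def E'_def by blast
    then show ?thesis unfolding valence_def by simp
  qed
  have chi1: "chi_set V E T' = (\<Sum>v\<in>V'. 2 - int (card {e\<in>E'. v \<in> e}))"
    unfolding chi_set_def chi_vertex_def V'_def[symmetric] using val by simp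
  have sw: "(\<Sum>v\<in>V'. card {e\<in>E'. v \<in> e}) = (\<Sum>e\<in>E'. card {v\<in>V'. v \<in> e})"
    using sum.swap_restrict[OF finV' finE', of "\<lambda>_ _. 1::nat" "\<lambda>v e. v \<in> e"] by simp
  have sp: "card {v\<in>V'. v \<in> e} + card (e - V') = 2" if "e \<in> E'" for e
  proof -
    have "{v\<in>V'. v \<in> e} = e \<inter> V'" by blast
    then show ?thesis using card_Int_Diff[OF fine[OF that], of V'] card2[OF that] by simp
  qed
  have eq1: "(\<Sum>v\<in>V'. card {e\<in>E'. v \<in> e}) + card Pr = 2 * card E'"
  proof -
    have "(\<Sum>e\<in>E'. card {v\<in>V'. v \<in> e}) + (\<Sum>e\<in>E'. card (e - V')) = (\<Sum>e\<in>E'. 2)"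
      unfolding sum.distrib[symmetric] using sp by (intro sum.cong) auto
    then show ?thesis using sw cardPr by simp
  qed
  have chi2: "chi_set V E T' = 2 * int (card V') - int (\<Sum>v\<in>V'. card {e\<in>E'. v \<in> e})"
    unfolding chi1 sum_subtractf by (simp add: of_nat_sum)
  have connsplit: "U = {} \<or> T' \<subseteq> U" if sU: "U \<subseteq> T'" and oU: "openin (tree_topology V E) U"
      and oD: "openin (tree_topology V E) (T' - U)" for U
  proof -
    have nex: "\<not> (\<exists>E1 E2. openin (tree_topology V E) E1 \<and> openin (tree_topology V E) E2 \<and>
             T' \<subseteq> E1 \<union> E2 \<and> E1 \<inter> E2 \<inter> T' = {} \<and> E1 \<inter> T' \<noteq> {} \<and> E2 \<inter> T' \<noteq> {})"
      using conn unfolding connectedin by (elim conjE)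
    show ?thesis
    proof (rule ccontr)
      assume c: "\<not> (U = {} \<or> T' \<subseteq> U)"
      have "openin (tree_topology V E) U \<and> openin (tree_topology V E) (T' - U) \<and>
             T' \<subseteq> U \<union> (T' - U) \<and> U \<inter> (T' - U) \<inter> T' = {} \<and> U \<inter> T' \<noteq> {} \<and> (T' - U) \<inter> T' \<noteq> {}"
        using oU oD sU c by auto
      then have "\<exists>E1 E2. openin (tree_topology V E) E1 \<and> openin (tree_topology V E) E2 \<and>
             T' \<subseteq> E1 \<union> E2 \<and> E1 \<inter> E2 \<inter> T' = {} \<and> E1 \<inter> T' \<noteq> {} \<and> E2 \<inter> T' \<noteq> {}"
        by (intro exI[of _ U] exI[of _ "T' - U"])
      then show False using nex by simp
    qed
  qed
  have e2': "e = {u, w}" if h: "e \<in> E'" "u \<in> e" "w \<in> e" "u \<noteq> w" for e u w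
  proof -
    obtain p q where "e = {p, q}" "p \<noteq> q" using e2[OF h(1)] by blast
    then show ?thesis using h(2-4) by auto
  qed
  define en :: "'v set \<Rightarrow> 'v \<Rightarrow> 'v + 'v set \<times> 'v" where "en e u = (if u \<in> V' then Inl u else Inr (e, u))" for e u
  define pr :: "'v + 'v set \<times> 'v \<Rightarrow> 'v" where "pr x = (case x of Inl u \<Rightarrow> u | Inr p \<Rightarrow> snd p)" for x
  define SV where "SV = Inl ` V' \<union> Inr ` Pr"
  define SE where "SE = (\<lambda>e. en e ` e) ` E'"
  define R where "R = {(x, y). {x, y} \<in> SE}"
  have pr_en: "pr (en e u) = u" for e u by (simp add: pr_def en_def)
  have pr_img: "pr ` en e ` e = e" for e by (simp add: image_image pr_en)
  have en_SV: "en e u \<in> SV" if "e \<in> E'" "u \<in> e" for e u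
    using that unfolding en_def SV_def Pr_def by auto
  have pr_SE: "pr ` x \<in> E'" if "x \<in> SE" for x
    using that pr_img unfolding SE_def by auto
  have edgeR: "{en e u, en e w} \<in> SE" if "e \<in> E'" "u \<in> e" "w \<in> e" "u \<noteq> w" for e u w
  proof -
    have eq: "en e ` e = {en e u, en e w}" using e2'[OF that] by simp
    have "en e ` e \<in> SE" unfolding SE_def using that(1) by (rule imageI)
    then show ?thesis unfolding eq .
  qed
  have finSV: "finite SV" unfolding SV_def using finV' finPr by simp
  have gS: "is_graph SV SE" unfolding is_graph_def
  proof (intro conjI ballI finSV)
    fix x assume "x \<in> SE"
    then obtain e where eE': "e \<in> E'" and xe: "x = en e ` e" unfolding SE_def by blast
    obtain u w where uw: "e = {u, w}" "u \<noteq> w" using e2[OF eE'] by blast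
    have x2: "x = {en e u, en e w}" using xe uw by simp
    have nq: "en e u \<noteq> en e w" using uw(2) pr_en by metis
    have ue: "u \<in> e" "w \<in> e" using uw(1) by simp_all
    show "\<exists>a b. x = {a, b} \<and> a \<noteq> b \<and> a \<in> SV \<and> b \<in> SV"
      by (intro exI[of _ "en e u"] exI[of _ "en e w"] conjI x2 nq en_SV[OF eE' ue(1)] en_SV[OF eE' ue(2)])
  qed
  have SVne: "SV \<noteq> {}"
  proof -
    obtain z where z: "z \<in> T'" using ne by blast
    show ?thesis
    proof (cases z)
      case (Inl v)
      then have "v \<in> V'" using z sub unfolding V'_def tree_space_def by auto
      then show ?thesis unfolding SV_def by blast
    next
      case (Inr e)
      then have eE': "e \<in> E'" using z sub unfolding E'_def tree_space_def by auto
      obtain u w where "e = {u, w}" using e2[OF eE'] by blast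
      then have "u \<in> e" by simp
      then show ?thesis using en_SV[OF eE'] by blast
    qed
  qed
  have reach: "(a, y) \<in> R\<^sup>*" if aS: "a \<in> SV" and yS: "y \<in> SV" for a y
  proof -
    define Reach where "Reach = {x. (a, x) \<in> R\<^sup>*}"
    define U :: "('v + 'v set) set" where "U = {z \<in> T'. (\<forall>v. z = Inl v \<longrightarrow> (Inl v :: 'v + 'v set \<times> 'v) \<in> Reach) \<and>
        (\<forall>e. z = Inr e \<longrightarrow> (\<exists>u\<in>e. en e u \<in> Reach))}"
    have RR: "(en e u, en e w) \<in> R" if "e \<in> E'" "u \<in> e" "w \<in> e" "u \<noteq> w" for e u w
      using edgeR[OF that] unfolding R_def by simp
    have oU: "openin (tree_topology V E) U" unfolding open_tree[OF g]
    proof (intro conjI allI impI)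
      show "U \<subseteq> tree_space V E" unfolding U_def using sub by auto
      fix v e assume v: "Inl v \<in> U" and eE: "e \<in> E" and ve: "v \<in> e"
      have vT: "Inl v \<in> T'" and vR: "(Inl v :: 'v + 'v set \<times> 'v) \<in> Reach" using v unfolding U_def by auto
      have vV': "v \<in> V'" unfolding V'_def using vT ev[OF eE ve] by simp
      have eT: "Inr e \<in> T'" using opc[OF vT eE ve] .
      have "en e v \<in> Reach" using vR vV' unfolding en_def by simp
      then show "Inr e \<in> U" unfolding U_def using eT ve by auto
    qed
    have oD: "openin (tree_topology V E) (T' - U)" unfolding open_tree[OF g]
    proof (intro conjI allI impI)
      show "T' - U \<subseteq> tree_space V E" using sub by auto
      fix v e assume v: "Inl v \<in> T' - U" and eE: "e \<in> E" and ve: "v \<in> e"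
      have vT: "Inl v \<in> T'" using v by simp
      have vR: "(Inl v :: 'v + 'v set \<times> 'v) \<notin> Reach" using v unfolding U_def by auto
      have vV': "v \<in> V'" unfolding V'_def using vT ev[OF eE ve] by simp
      have eT: "Inr e \<in> T'" using opc[OF vT eE ve] .
      then have eE': "e \<in> E'" unfolding E'_def using eE by simp
      have envv: "en e v = Inl v" using vV' unfolding en_def by simp
      have "Inr e \<notin> U"
      proof
        assume "Inr e \<in> U"
        then obtain u where u: "u \<in> e" "en e u \<in> Reach" unfolding U_def by auto
        show False
        proof (cases "u = v")
          case True then show False using u vR envv by simp
        next
          case False
          have "(en e u, en e v) \<in> R" using RR[OF eE' u(1) ve False] .
          then have "(a, en e v) \<in> R\<^sup>*" using u(2) unfolding Reach_def by simp
          then show False using vR envv unfolding Reach_def by simp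
        qed
      qed
      then show "Inr e \<in> T' - U" using eT by simp
    qed
    have Une: "U \<noteq> {}"
    proof (cases a)
      case (Inl v)
      then have vV': "v \<in> V'" using aS unfolding SV_def by auto
      then have "Inl v \<in> U" unfolding U_def Reach_def V'_def using Inl by auto
      then show ?thesis by blast
    next
      case (Inr p)
      then obtain e b where p: "p = (e, b)" by (cases p) auto
      then have pP: "(e, b) \<in> Pr" using aS Inr unfolding SV_def by auto
      then have eE': "e \<in> E'" and be: "b \<in> e" and bV': "b \<notin> V'" unfolding Pr_def by auto
      have "en e b = a" using bV' Inr p unfolding en_def by simp
      then have "en e b \<in> Reach" unfolding Reach_def by simp
      then have "Inr e \<in> U" unfolding U_def using eE' be unfolding E'_def by auto
      then show ?thesis by blast
    qed
    have sUT: "U \<subseteq> T'" unfolding U_def by (rule subsetI) (elim CollectE conjE)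
    have TU: "T' \<subseteq> U" using connsplit[OF sUT oU oD] Une by (elim disjE) simp_all
    show ?thesis
    proof (cases y)
      case (Inl v)
      then have "v \<in> V'" using yS unfolding SV_def by auto
      then have "Inl v \<in> U" using TU unfolding V'_def by auto
      then show ?thesis using Inl unfolding U_def Reach_def by simp
    next
      case (Inr p)
      then obtain e b where p: "p = (e, b)" by (cases p) auto
      then have pP: "(e, b) \<in> Pr" using yS Inr unfolding SV_def by auto
      then have eE': "e \<in> E'" and be: "b \<in> e" and bV': "b \<notin> V'" unfolding Pr_def by auto
      have yeb: "en e b = y" using bV' Inr p unfolding en_def by simp
      have "Inr e \<in> U" using TU eE' unfolding E'_def by auto
      then obtain u where u: "u \<in> e" "en e u \<in> Reach" unfolding U_def by auto
      show ?thesis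
      proof (cases "u = b")
        case True then show ?thesis using u yeb unfolding Reach_def by simp
      next
        case False
        have "(en e u, en e b) \<in> R" using RR[OF eE' u(1) be False] .
        then show ?thesis using u(2) yeb unfolding Reach_def by simp
      qed
    qed
  qed
  have cS: "graph_connected SV SE" unfolding graph_connected_def
  proof (intro conjI ballI SVne)
    fix x y assume "x \<in> SV" "y \<in> SV"
    from reach[OF this] show "(x, y) \<in> {(x, y). {x, y} \<in> SE}\<^sup>*" unfolding R_def .
  qed
  have nbr: "x = en e ` e" if xS: "x \<in> SE" and ix: "Inr (e, b) \<in> x" for x e b
  proof -
    obtain e' where e': "e' \<in> E'" "x = en e' ` e'" using xS unfolding SE_def by blast
    then obtain u where u: "u \<in> e'" "Inr (e, b) = en e' u" using ix by blast
    have "e' = e" using u(2) unfolding en_def by (cases "u \<in> V'") simp_all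
    then show ?thesis using e'(2) by simp
  qed
  have prSV: "pr x \<in> V" if "x \<in> SV" for x
  proof (cases x)
    case (Inl v) then show ?thesis using that V'V unfolding SV_def pr_def by auto
  next
    case (Inr p)
    then obtain e b where p: "p = (e, b)" by (cases p) auto
    then have "(e, b) \<in> Pr" using that Inr unfolding SV_def by auto
    then have "e \<in> E" "b \<in> e" unfolding Pr_def using E'E by auto
    then show ?thesis using ev Inr p unfolding pr_def by simp
  qed
  have ncS: "\<not> has_cycle SV SE"
  proof
    assume "has_cycle SV SE"
    then obtain vs where L3: "length vs \<ge> 3" and dvs: "distinct vs" and svs: "set vs \<subseteq> SV"
      and evs: "\<And>i. i < length vs \<Longrightarrow> {vs ! i, vs ! ((i + 1) mod length vs)} \<in> SE"
      unfolding has_cycle_def by blast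
    define L where "L = length vs"
    have allInl: "\<exists>u. vs ! i = Inl u" if iL: "i < L" for i
    proof (rule ccontr)
      assume nI: "\<nexists>u. vs ! i = Inl u"
      then obtain p where "vs ! i = Inr p" by (cases "vs ! i") auto
      then obtain e b where vi: "vs ! i = Inr (e, b)" by (cases p) auto
      have "vs ! i \<in> SV" using svs iL unfolding L_def by auto
      then have "(e, b) \<in> Pr" using vi unfolding SV_def by auto
      then have eE': "e \<in> E'" and be: "b \<in> e" and bV': "b \<notin> V'" unfolding Pr_def by auto
      obtain p q where pq: "e = {p, q}" "p \<noteq> q" using e2[OF eE'] by blast
      define c where "c = (if p = b then q else p)"
      have ebc: "e = {b, c}" using pq be unfolding c_def by auto
      have enb: "en e b = Inr (e, b)" using bV' unfolding en_def by simp
      have img: "en e ` e = {Inr (e, b), en e c}" using ebc enb by simp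
      define j where "j = (if i + 1 = L then 0 else i + 1)"
      define k where "k = (if i = 0 then L - 1 else i - 1)"
      have L3': "L \<ge> 3" using L3 unfolding L_def .
      have jL: "j < L" and kL: "k < L" using iL L3' unfolding j_def k_def by auto
      have jm: "(i + 1) mod L = j" using iL unfolding j_def by auto
      have km: "(k + 1) mod L = i" using iL L3' unfolding k_def by auto
      have ji: "j \<noteq> i" and ki: "k \<noteq> i" and jk: "j \<noteq> k" using iL L3' unfolding j_def k_def by auto
      have e1: "{vs ! i, vs ! j} \<in> SE" using evs[of i] iL jm unfolding L_def by simp
      have e2x: "{vs ! k, vs ! i} \<in> SE" using evs[of k] kL km unfolding L_def by simp
      have "Inr (e, b) \<in> {vs ! i, vs ! j}" using vi by simp
      from nbr[OF e1 this] have "{vs ! i, vs ! j} = en e ` e" .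
      then have "vs ! j \<in> {Inr (e, b), en e c}" unfolding img by blast
      moreover have "vs ! j \<noteq> vs ! i" using dvs ji jL iL unfolding L_def by (simp add: nth_eq_iff_index_eq)
      ultimately have vj: "vs ! j = en e c" using vi by auto
      have "Inr (e, b) \<in> {vs ! k, vs ! i}" using vi by simp
      from nbr[OF e2x this] have "{vs ! k, vs ! i} = en e ` e" .
      then have "vs ! k \<in> {Inr (e, b), en e c}" unfolding img by blast
      moreover have "vs ! k \<noteq> vs ! i" using dvs ki kL iL unfolding L_def by (simp add: nth_eq_iff_index_eq)
      ultimately have vk: "vs ! k = en e c" using vi by auto
      have "vs ! j = vs ! k" using vj vk by simp
      then have "j = k" using dvs jL kL unfolding L_def by (simp add: nth_eq_iff_index_eq)
      then show False using jk by simp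
    qed
    define us where "us = map pr vs"
    have inj: "inj_on pr (set vs)"
    proof (rule inj_onI)
      fix x y assume x: "x \<in> set vs" and y: "y \<in> set vs" and pxy: "pr x = pr y"
      obtain i where i: "i < L" "vs ! i = x" using x unfolding L_def by (auto simp: in_set_conv_nth)
      obtain i' where i': "i' < L" "vs ! i' = y" using y unfolding L_def by (auto simp: in_set_conv_nth)
      obtain a where a: "x = Inl a" using allInl[OF i(1)] i(2) by auto
      obtain a' where a': "y = Inl a'" using allInl[OF i'(1)] i'(2) by auto
      show "x = y" using pxy a a' unfolding pr_def by simp
    qed
    have "has_cycle V E" unfolding has_cycle_def
    proof (intro exI[of _ us] conjI allI impI)
      show "3 \<le> length us" unfolding us_def using L3 by simp
      show "distinct us" unfolding us_def using dvs inj by (simp add: distinct_map)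
      show "set us \<subseteq> V" unfolding us_def using svs prSV by auto
      fix i assume i: "i < length us"
      have iL: "i < L" using i unfolding us_def L_def by simp
      have mL: "(i + 1) mod L < L" using iL by simp
      have "{vs ! i, vs ! ((i + 1) mod L)} \<in> SE" using evs[of i] iL unfolding L_def by simp
      from pr_SE[OF this] have "pr ` {vs ! i, vs ! ((i + 1) mod L)} \<in> E'" .
      then have "{us ! i, us ! ((i + 1) mod length us)} \<in> E'" unfolding us_def using iL mL unfolding L_def by simp
      then show "{us ! i, us ! ((i + 1) mod length us)} \<in> E" using E'E by blast
    qed
    then show False using tree unfolding is_tree_def by simp
  qed
  have cardSV: "card SV = card V' + card Pr"
  proof -
    have "card SV = card (Inl ` V' :: ('v + 'v set \<times> 'v) set) + card (Inr ` Pr :: ('v + 'v set \<times> 'v) set)"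
      unfolding SV_def by (rule card_Un_disjoint) (use finV' finPr in auto)
    then show ?thesis by (simp add: card_image)
  qed
  have cardSE: "card SE = card E'"
  proof -
    have "inj_on (\<lambda>e. en e ` e) E'"
    proof (rule inj_onI)
      fix e e' assume "en e ` e = en e' ` e'"
      then have "pr ` en e ` e = pr ` en e' ` e'" by simp
      then show "e = e'" unfolding pr_img .
    qed
    then show ?thesis unfolding SE_def by (rule card_image)
  qed
  have eq2: "card V' + card Pr = card E' + 1"
    using tree_card[of SV SE] gS cS ncS cardSV cardSE unfolding is_tree_def by simp

  have eq3: "card V' + card B = card E' + 1"
  proof -
    define W where "W = V' \<union> B"
    have prW: "pr x \<in> W" if "x \<in> SV" for x
    proof (cases x)
      case (Inl v) then show ?thesis using that unfolding SV_def pr_def W_def by auto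
    next
      case (Inr p)
      then obtain e b where p: "p = (e, b)" by (cases p) auto
      then have "(e, b) \<in> Pr" using that Inr unfolding SV_def by auto
      then have eE': "e \<in> E'" and be: "b \<in> e" and bV': "b \<notin> V'" unfolding Pr_def by auto
      have "b \<in> V" using ev[of e b] eE' be E'E by blast
      then have "b \<in> B" unfolding B_def using eE' be bV' by blast
      then show ?thesis using Inr p unfolding pr_def W_def by simp
    qed
    have Wpr: "\<exists>x\<in>SV. pr x = w" if "w \<in> W" for w
    proof (cases "w \<in> V'")
      case True
      then have "Inl w \<in> SV" unfolding SV_def by blast
      moreover have "pr (Inl w) = w" unfolding pr_def by simp
      ultimately show ?thesis by blast
    next
      case False
      then have "w \<in> B" using that unfolding W_def by blast
      then obtain e where "e \<in> E'" "w \<in> e" unfolding B_def by blast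
      then have "(e, w) \<in> Pr" unfolding Pr_def using False by blast
      then have "Inr (e, w) \<in> SV" unfolding SV_def by blast
      moreover have "pr (Inr (e, w)) = w" unfolding pr_def by simp
      ultimately show ?thesis by blast
    qed
    have gW: "is_graph W E'" unfolding is_graph_def
    proof (intro conjI ballI)
      show "finite W" unfolding W_def using finV' finB by simp
      fix e assume eE': "e \<in> E'"
      obtain u w where uw: "e = {u, w}" "u \<noteq> w" "u \<in> V" "w \<in> V" using e2[OF eE'] by blast
      have "u \<in> W" using uw eE' unfolding W_def B_def by auto
      moreover have "w \<in> W" using uw eE' unfolding W_def B_def by auto
      ultimately show "\<exists>u w. e = {u, w} \<and> u \<noteq> w \<and> u \<in> W \<and> w \<in> W" using uw by blast
    qed
    have mapR: "(pr x, pr y) \<in> {(x, y). {x, y} \<in> E'}\<^sup>*" if "(x, y) \<in> R\<^sup>*" for x y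
      using that
    proof (induction rule: rtrancl_induct)
      case base then show ?case by simp
    next
      case (step y z)
      have "{y, z} \<in> SE" using step(2) unfolding R_def by simp
      from pr_SE[OF this] have "{pr y, pr z} \<in> E'" by simp
      then have "(pr y, pr z) \<in> {(x, y). {x, y} \<in> E'}" by simp
      with step(3) show ?case by (rule rtrancl_into_rtrancl)
    qed
    have cW: "graph_connected W E'" unfolding graph_connected_def
    proof (intro conjI ballI)
      obtain a where "a \<in> SV" using SVne by blast
      then show "W \<noteq> {}" using prW by blast
      fix u w assume "u \<in> W" "w \<in> W"
      then obtain x y where "x \<in> SV" "pr x = u" "y \<in> SV" "pr y = w" using Wpr by meson
      then show "(u, w) \<in> {(x, y). {x, y} \<in> E'}\<^sup>*" using mapR[OF reach] by blast
    qed
    have "W \<subseteq> V" unfolding W_def B_def using V'V by blast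
    then have ncW: "\<not> has_cycle W E'" using has_cycle_mono[of W E' V E] E'E tree unfolding is_tree_def by blast
    have "card W = card E' + 1" using tree_card[of W E'] gW cW ncW unfolding is_tree_def by simp
    moreover have "card W = card V' + card B" unfolding W_def
      by (rule card_Un_disjoint) (use finV' finB in \<open>auto simp: B_def\<close>)
    ultimately show ?thesis by simp
  qed

  have "card (tree_boundary V E T') = card B" unfolding bd by (simp add: card_image)
  then show ?thesis using chi2 eq1 eq2 eq3 by linarith
qed


end
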